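(* Let $\mathcal F_s(\lambda_s)=\sum_{g\ge2}a_g\lambda_s^{2g-2}$ (a formal power series in $\lambda_s$). Under the standing assumptions in the context, $\mathcal F_s$ satisfies $$\theta_{\lambda_s}^2\mathcal F_s+(\theta_{\lambda_s}\mathcal F_s)^2+2\left(1-\frac{2}{3\lambda_s^2}\right)\theta_{\lambda_s}\mathcal F_s+\frac59=0,\qquad \theta_{\lambda_s}=\lambda_s\frac{\partial}{\partial\lambda_s}.$$
   Context: Setting: the polynomial formulation of the BCOV holomorphic anomaly equations on a one-dimensional slice (local coordinate $z$) of the moduli space of a Calabi–Yau threefold. $C_{zzz}$ is the holomorphic Yukawa coupling, assumed nonzero. The genus-$g$ free energies $\mathcal F^{(g)}$ ($g\ge 1$) are polynomials in the generators $S^{zz},S^z,S,K_z$ with coefficients holomorphic in $z$; for $g\ge2$, $\mathcal F^{(g)}$ has weighted degree $3g-3$ (weights $1,2,3,1$) and its term of highest degree in $S^{zz}$ is $a_g\,C_{zzz}^{2g-2}(S^{zz})^{3g-3}$, $a_g\in\mathbb Q$. The total free energy is $\mathcal F=\sum_{g\ge2}\lambda^{2g-2}\mathcal F^{(g)}$, with $\lambda$ the topological string coupling. The scaling limit: replace $S^{zz}$ by $\varepsilon^{2/3}S^{zz}$ and $\lambda$ by $\lambda/\varepsilon$ and let $\varepsilon\to0$; only the terms $a_gC_{zzz}^{2g-2}(S^{zz})^{3g-3}\lambda^{2g-2}$ survive, giving $\mathcal F_s=\sum_{g\ge2}a_g\lambda_s^{2g-2}$ with rescaled coupling $\lambda_s^2=\lambda^2C_{zzz}^2(S^{zz})^3$.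 "l.o.t." means terms of lower degree in $S^{zz}$. $D_z$ is a derivation with $D_zS^{zz}=-C_{zzz}(S^{zz})^2+\text{l.o.t.}$ and $D_zC_{zzz}=3C_{zzz}^2S^{zz}+\text{l.o.t.}$; $D_z\mathcal F^{(1)}=\tfrac12C_{zzz}S^{zz}+\text{l.o.t.}$; and for $g\ge2$, $\partial\mathcal F^{(g)}/\partial S^{zz}=\frac12\sum_{h=1}^{g-1}D_z\mathcal F^{(h)}D_z\mathcal F^{(g-h)}+\frac12D_zD_z\mathcal F^{(g-1)}$. *)

theory Defs
  imports "HOL-Computational_Algebra.Polynomial" "HOL-Computational_Algebra.Formal_Laurent_Series"
begin

definition theta_op :: "'a::field fls \<Rightarrow> 'a fls" where
  "theta_op f = fls_X * fls_deriv f"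

text \<open>Scaling-limit free energy F_s(lambda_s) = sum over g >= 2 of a_g lambda_s^(2g-2),
  as a formal (Laurent) series with rational coefficients.\<close>
definition scaling_free_energy :: "(nat \<Rightarrow> rat) \<Rightarrow> rat fls" where
  "scaling_free_energy a =
     fps_to_fls (Abs_fps (\<lambda>n. if even n \<and> 2 \<le> n then a (n div 2 + 1) else 0))"

end

theory Submission
  imports Defs
begin


lemma deg_coeff_mult:
  fixes p q :: "'a::idom poly"
  assumes "degree p \<le> m" "degree q \<le> n"
  shows "degree (p*q) \<le> m+n \<and> coeff (p*q) (m+n) = coeff p m * coeff q n"
proof
  show d: "degree (p*q) \<le> m+n" using degree_mult_le[of p q] assms by linarith
  show "coeff (p*q) (m+n) = coeff p m * coeff q n"
  proof (cases "degree p = m \<and> degree q = n")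
    case True then show ?thesis using coeff_mult_degree_sum[of p q] by simp
  next
    case False
    hence "degree p < m \<or> degree q < n" using assms by auto
    hence z: "coeff p m * coeff q n = 0" by (auto simp: coeff_eq_0)
    have "degree (p*q) < m + n" using degree_mult_le[of p q] assms False by linarith
    hence "coeff (p*q) (m+n) = 0" by (simp add: coeff_eq_0)
    with z show ?thesis by simp
  qed
qed

locale dctx =
  fixes D :: "'r::field_char_0 poly \<Rightarrow> 'r poly" and C :: 'r
  assumes D_add: "\<forall>p q. D (p + q) = D p + D q"
    and D_Leibniz: "\<forall>p q. D (p * q) = p * D q + D p * q"
    and D_coeff: "\<forall>c. degree (D [:c:]) \<le> 1"
    and D_Szz: "degree (D [:0, 1:] + monom C 2) \<le> 1"
    and D_C: "degree (D [:C:] - monom (3 * C ^ 2) 1) = 0"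
begin

definition d1 :: "'r \<Rightarrow> 'r" where "d1 c = coeff (D [:c:]) 1"

lemma D0: "D 0 = 0"
  using D_add by (metis add.right_neutral add_cancel_right_right)

lemma D1: "D 1 = 0"
proof -
  have "D (1*1) = 1 * D 1 + D 1 * 1" using D_Leibniz by blast
  thus ?thesis by simp
qed

lemma d1_add: "d1 (c + c') = d1 c + d1 c'"
  unfolding d1_def using D_add by (metis coeff_add pCons_0_0 add_pCons add.right_neutral)

lemma d1_mult: "d1 (c * c') = c * d1 c' + d1 c * c'"
proof -
  have e: "[:c:] * [:c':] = [:c*c':]" by simp
  have "D [:c*c':] = [:c:] * D [:c':] + D [:c:] * [:c':]"
    using D_Leibniz[rule_format, of "[:c:]" "[:c':]"] unfolding e .
  hence "coeff (D [:c*c':]) 1 = coeff ([:c:] * D [:c':]) 1 + coeff (D [:c:] * [:c':]) 1" by simp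
  also have "... = c * coeff (D [:c':]) 1 + coeff (D [:c:]) 1 * c'" by simp
  finally show ?thesis unfolding d1_def .
qed

lemma d1_0: "d1 0 = 0" using d1_add[of 0 0] by simp
lemma d1_1: "d1 1 = 0" using d1_mult[of 1 1] by simp
lemma d1_neg: "d1 (- c) = - d1 c" using d1_add[of c "-c"] d1_0 by (simp add: eq_neg_iff_add_eq_0 add.commute)
lemma d1_of_nat: "d1 (of_nat n) = 0"
  by (induction n) (simp_all add: d1_0 d1_add d1_1)
lemma d1_of_int: "d1 (of_int z) = 0"
proof (cases "0 \<le> z")
  case True
  then have "of_int z = (of_nat (nat z) :: 'r)" by simp
  then show ?thesis by (simp add: d1_of_nat)
next
  case False
  then have "of_int z = - (of_nat (nat (-z)) :: 'r)" by simp
  then show ?thesis by (simp add: d1_of_nat d1_neg)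
qed
lemma d1_inverse: "d1 c = 0 \<Longrightarrow> d1 (inverse c) = 0"
proof (cases "c = 0")
  case True then show ?thesis by (simp add: d1_0)
next
  case False
  assume h: "d1 c = 0"
  have "d1 (c * inverse c) = c * d1 (inverse c)" using d1_mult[of c "inverse c"] h by simp
  hence "c * d1 (inverse c) = 0" using False d1_1 by simp
  thus ?thesis using False by simp
qed
lemma d1_of_rat: "d1 (of_rat q) = 0"
proof (cases q)
  case (Fract a b)
  then show ?thesis using d1_mult[of "of_int a" "inverse (of_int b)"]
    by (simp add: of_rat_rat divide_inverse d1_of_int d1_inverse)
qed

lemma d1_C: "d1 C = 3 * C^2"
proof -
  have "coeff (D [:C:] - monom (3 * C ^ 2) 1) 1 = 0"
    using D_C coeff_eq_0[of "D [:C:] - monom (3 * C ^ 2) 1" 1] by simp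
  thus ?thesis unfolding d1_def by simp
qed

lemma d1_Cpow: "d1 (C^k) = 3 * of_nat k * C^(k+1)"
proof (induction k)
  case 0 then show ?case by (simp add: d1_1)
next
  case (Suc k)
  have "d1 (C^Suc k) = d1 (C * C^k)" by simp
  also have "... = C * (3 * of_nat k * C^(k+1)) + 3 * C^2 * C^k" using d1_mult Suc d1_C by simp
  also have "... = 3 * of_nat (Suc k) * C^(Suc k + 1)" by (simp add: algebra_simps power2_eq_square)
  finally show ?case .
qed

lemma d1_lead: "d1 (of_rat q * C^k) = of_rat q * (3 * of_nat k * C^(k+1))"
  using d1_mult[of "of_rat q" "C^k"] by (simp add: d1_Cpow d1_of_rat)

lemma Dx: "degree (D [:0,1:]) \<le> 2 \<and> coeff (D [:0,1:]) 2 = - C"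
proof
  have "D [:0,1:] = (D [:0, 1:] + monom C 2) - monom C 2" by simp
  also have "degree ... \<le> 2"
    by (rule order.trans[OF degree_diff_le_max]) (use D_Szz in \<open>auto simp: degree_monom_le\<close>)
  finally show "degree (D [:0,1:]) \<le> 2" .
  have "coeff (D [:0, 1:] + monom C 2) 2 = 0"
    using D_Szz coeff_eq_0[of "D [:0, 1:] + monom C 2" 2] by linarith
  thus "coeff (D [:0,1:]) 2 = - C" by (simp add: eq_neg_iff_add_eq_0)
qed

lemma Dxpow: "degree (D ([:0,1:]^n)) \<le> n+1 \<and> coeff (D ([:0,1:]^n)) (n+1) = - of_nat n * C"
proof (induction n)
  case 0 then show ?case using D1 by simp
next
  case (Suc n)
  have e: "D ([:0,1:]^Suc n) = [:0,1:] * D ([:0,1:]^n) + D [:0,1:] * [:0,1:]^n"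
    using D_Leibniz[rule_format, of "[:0,1:]" "[:0,1:]^n"] by (simp only: power_Suc)
  have x: "degree ([:0,1::'r:]) \<le> 1" "coeff [:0,1::'r:] 1 = 1" by simp_all
  have xn: "degree ([:0,1::'r:]^n) \<le> n" "coeff ([:0,1::'r:]^n) n = 1"
  proof -
    have "[:0,1::'r:]^n = monom 1 n" using monom_altdef[of "1::'r" n] by simp
    thus "degree ([:0,1::'r:]^n) \<le> n" "coeff ([:0,1::'r:]^n) n = 1" by (simp_all add: degree_monom_le)
  qed
  have A: "degree ([:0,1:] * D ([:0,1:]^n)) \<le> 1+(n+1) \<and> coeff ([:0,1:] * D ([:0,1:]^n)) (1+(n+1)) = - of_nat n * C"
    using deg_coeff_mult[OF x(1) conjunct1[OF Suc]] x(2) Suc by simp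
  have B: "degree (D [:0,1:] * [:0,1:]^n) \<le> 2+n \<and> coeff (D [:0,1:] * [:0,1:]^n) (2+n) = - C"
    using deg_coeff_mult[OF conjunct1[OF Dx] xn(1)] Dx xn(2) by simp
  show ?case unfolding e
  proof
    show "degree ([:0,1:] * D ([:0,1:]^n) + D [:0,1:] * [:0,1:]^n) \<le> Suc n + 1"
      using A B by (intro degree_add_le) (simp_all add: numeral_2_eq_2)
    show "coeff ([:0,1:] * D ([:0,1:]^n) + D [:0,1:] * [:0,1:]^n) (Suc n + 1) = - of_nat (Suc n) * C"
      using A B by (simp add: algebra_simps)
  qed
qed

lemma Dmonom: "degree (D (monom c n)) \<le> n+1 \<and>
   coeff (D (monom c n)) (n+1) = - of_nat n * C * c + d1 c"
proof -
  have m: "monom c n = [:c:] * [:0,1:]^n" by (simp add: monom_altdef)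
  have e: "D (monom c n) = [:c:] * D ([:0,1:]^n) + D [:c:] * [:0,1:]^n"
    unfolding m using D_Leibniz by blast
  have xn: "degree ([:0,1::'r:]^n) \<le> n" "coeff ([:0,1::'r:]^n) n = 1"
  proof -
    have "[:0,1::'r:]^n = monom 1 n" using monom_altdef[of "1::'r" n] by simp
    thus "degree ([:0,1::'r:]^n) \<le> n" "coeff ([:0,1::'r:]^n) n = 1" by (simp_all add: degree_monom_le)
  qed
  have c0: "degree [:c:] \<le> 0" by simp
  have A: "degree ([:c:] * D ([:0,1:]^n)) \<le> n+1 \<and> coeff ([:c:] * D ([:0,1:]^n)) (n+1) = c * (- of_nat n * C)"
    using deg_coeff_mult[OF c0 conjunct1[OF Dxpow[of n]]] Dxpow[of n] by simp
  have B: "degree (D [:c:] * [:0,1:]^n) \<le> n+1 \<and> coeff (D [:c:] * [:0,1:]^n) (n+1) = d1 c"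
    using deg_coeff_mult[OF D_coeff[rule_format, of c] xn(1)] xn(2) by (simp add: d1_def add.commute)
  show ?thesis unfolding e using A B by (simp add: degree_add_le algebra_simps)
qed

lemma Dgen: "degree p \<le> n \<Longrightarrow> degree (D p) \<le> n+1 \<and>
   coeff (D p) (n+1) = - of_nat n * C * coeff p n + d1 (coeff p n)"
proof (induction n arbitrary: p)
  case 0
  then have "p = monom (coeff p 0) 0" by (metis degree_0_id monom_0 le_zero_eq)
  then show ?case using Dmonom[of "coeff p 0" 0] by simp
next
  case (Suc k)
  define q where "q = p - monom (coeff p (Suc k)) (Suc k)"
  have dq: "degree q \<le> k"
  proof (rule degree_le, intro allI impI)
    fix i assume "k < i"
    show "coeff q i = 0"
    proof (cases "i = Suc k")
      case True then show ?thesis by (simp add: q_def)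
    next
      case False
      hence "Suc k < i" using \<open>k < i\<close> by simp
      hence "coeff p i = 0" using Suc.prems by (simp add: coeff_eq_0)
      thus ?thesis using False by (simp add: q_def)
    qed
  qed
  have p: "p = monom (coeff p (Suc k)) (Suc k) + q" by (simp add: q_def)
  have e: "D p = D (monom (coeff p (Suc k)) (Suc k)) + D q" using D_add p by metis
  have Q: "degree (D q) \<le> Suc k" using Suc.IH[OF dq] by simp
  hence Q0: "coeff (D q) (Suc k + 1) = 0" by (simp add: coeff_eq_0)
  show ?case unfolding e using Dmonom[of "coeff p (Suc k)" "Suc k"] Q Q0
    by (auto intro: degree_add_le)
qed

end

definition bet :: "(nat \<Rightarrow> rat) \<Rightarrow> nat \<Rightarrow> rat" where
  "bet a h = (if h = 1 then 1/2 else 3 * of_nat (h - 1) * a h)"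

locale dctx2 = dctx D C for D :: "'r::field_char_0 poly \<Rightarrow> 'r poly" and C +
  fixes G1 :: "'r poly" and F :: "nat \<Rightarrow> 'r poly" and DF :: "nat \<Rightarrow> 'r poly" and a :: "nat \<Rightarrow> rat"
  assumes C_nonzero: "C \<noteq> 0"
    and DF1: "degree (G1 - monom (C / 2) 1) = 0"
    and DF_def: "\<forall>h. DF h = (if h = 1 then G1 else D (F h))"
    and leading: "\<forall>g\<ge>2. degree (F g - monom (of_rat (a g) * C ^ (2 * g - 2)) (3 * g - 3))
                          < 3 * g - 3"
    and anomaly: "\<forall>g\<ge>2. pderiv (F g) =
                     smult (1 / 2) (\<Sum>h = 1..g - 1. DF h * DF (g - h))
                     + smult (1 / 2) (D (DF (g - 1)))"
begin

lemma Fl: "degree (F (j+2)) \<le> 3*j+3 \<and> coeff (F (j+2)) (3*j+3) = of_rat (a (j+2)) * C^(2*j+2)"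
proof -
  define c where "c = of_rat (a (j+2)) * C^(2*j+2)"
  have l: "degree (F (j+2) - monom c (3*j+3)) < 3*j+3"
    using leading[rule_format, of "j+2"] by (simp add: c_def algebra_simps)
  have e: "F (j+2) = (F (j+2) - monom c (3*j+3)) + monom c (3*j+3)" by simp
  have "degree (F (j+2)) \<le> 3*j+3"
    by (subst e, rule degree_add_le) (use l in \<open>simp_all add: degree_monom_le\<close>)
  moreover have "coeff (F (j+2) - monom c (3*j+3)) (3*j+3) = 0" by (rule coeff_eq_0[OF l])
  ultimately show ?thesis by (simp add: c_def)
qed

lemma DFl: "degree (DF (j+1)) \<le> 3*j+1 \<and> coeff (DF (j+1)) (3*j+1) = of_rat (bet a (j+1)) * C^(2*j+1)"
proof (cases j)
  case 0
  have l: "degree (G1 - monom (C/2) 1) < 1" using DF1 by simp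
  have e: "G1 = (G1 - monom (C/2) 1) + monom (C/2) 1" by simp
  have "degree G1 \<le> 1"
    by (subst e, rule degree_add_le) (use l in \<open>simp_all add: degree_monom_le\<close>)
  moreover have "coeff (G1 - monom (C/2) 1) 1 = 0" by (rule coeff_eq_0[OF l])
  ultimately show ?thesis using 0 DF_def by (simp add: bet_def of_rat_divide)
next
  case (Suc i)
  have dfe: "DF (j+1) = D (F (i+2))" using DF_def Suc by simp
  have G: "degree (D (F (i+2))) \<le> 3*i+3+1 \<and> coeff (D (F (i+2))) (3*i+3+1) =
      - of_nat (3*i+3) * C * (of_rat (a (i+2)) * C^(2*i+2)) + d1 (of_rat (a (i+2)) * C^(2*i+2))"
    using Dgen[OF conjunct1[OF Fl[of i]]] Fl[of i] by simp
  have v: "- of_nat (3*i+3) * C * (of_rat (a (i+2)) * C^(2*i+2)) + d1 (of_rat (a (i+2)) * C^(2*i+2))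
     = of_rat (bet a (j+1)) * C^(2*i+3)"
    unfolding d1_lead using Suc by (simp add: bet_def of_rat_add of_rat_mult of_rat_of_nat_eq of_rat_numeral_eq algebra_simps power_add power3_eq_cube power2_eq_square)
  have i1: "3*j+1 = 3*i+3+1" "2*j+1 = 2*i+3" using Suc by simp_all
  show ?thesis unfolding i1 dfe using G unfolding v .
qed

lemma recursion: "3 * of_nat (m+1) * a (m+2) =
        1/2 * (\<Sum>k=0..m. bet a (k+1) * bet a (m-k+1)) + 1/2 * of_nat (3*m+2) * bet a (m+1)"
proof -
  define P where "P = C^(2*m+2)"
  have P0: "P \<noteq> 0" using C_nonzero by (simp add: P_def)
  have an: "pderiv (F (m+2)) = smult (1 / 2) (\<Sum>h = 1..m+1. DF h * DF (m + 2 - h))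
                     + smult (1 / 2) (D (DF (m+1)))"
    using anomaly[rule_format, of "m+2"] by simp
  have L: "coeff (pderiv (F (m+2))) (3*m+2) = of_rat (3 * of_nat (m+1) * a (m+2)) * P"
  proof -
    have e: "Suc (3*m+2) = 3*m+3" by simp
    have c: "coeff (F (m+2)) (3*m+3) = of_rat (a (m+2)) * C^(2*m+2)" using Fl[of m] by blast
    show ?thesis unfolding coeff_pderiv e c P_def by (simp add: of_rat_add of_rat_mult of_rat_of_nat_eq of_rat_numeral_eq algebra_simps)
  qed
  have S: "coeff (\<Sum>h = 1..m+1. DF h * DF (m + 2 - h)) (3*m+2)
      = of_rat (\<Sum>k=0..m. bet a (k+1) * bet a (m-k+1)) * P"
  proof -
    have "coeff (\<Sum>h = 1..m+1. DF h * DF (m + 2 - h)) (3*m+2)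
        = (\<Sum>h = 1..m+1. coeff (DF h * DF (m + 2 - h)) (3*m+2))" by (simp add: coeff_sum)
    also have "... = (\<Sum>k = 0..m. coeff (DF (k+1) * DF (m + 2 - (k+1))) (3*m+2))"
      using sum.shift_bounds_cl_Suc_ivl[of "\<lambda>h. coeff (DF h * DF (m + 2 - h)) (3*m+2)" 0 m] by simp
    also have "... = (\<Sum>k = 0..m. of_rat (bet a (k+1) * bet a (m-k+1)) * P)"
    proof (rule sum.cong[OF refl])
      fix k assume "k \<in> {0..m}"
      hence km: "k \<le> m" by simp
      have e1: "m + 2 - (k+1) = (m-k)+1" using km by simp
      have e2: "3*m+2 = (3*k+1) + (3*(m-k)+1)" using km by simp
      have e3: "P = C^(2*k+1) * C^(2*(m-k)+1)" unfolding P_def power_add[symmetric] using km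
        by (simp add: algebra_simps)
      show "coeff (DF (k+1) * DF (m + 2 - (k+1))) (3*m+2) = of_rat (bet a (k+1) * bet a (m-k+1)) * P"
        unfolding e1 e2 e3
        using deg_coeff_mult[OF conjunct1[OF DFl[of k]] conjunct1[OF DFl[of "m-k"]]] DFl[of k] DFl[of "m-k"]
        by (simp add: of_rat_add of_rat_mult of_rat_of_nat_eq of_rat_numeral_eq algebra_simps)
    qed
    also have "... = of_rat (\<Sum>k=0..m. bet a (k+1) * bet a (m-k+1)) * P"
      by (simp add: of_rat_sum sum_distrib_right)
    finally show ?thesis .
  qed
  have T: "coeff (D (DF (m+1))) (3*m+2) = of_rat (of_nat (3*m+2) * bet a (m+1)) * P"
  proof -
    have "coeff (D (DF (m+1))) (3*m+1+1) = - of_nat (3*m+1) * C * (of_rat (bet a (m+1)) * C^(2*m+1))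
        + d1 (of_rat (bet a (m+1)) * C^(2*m+1))"
      using Dgen[OF conjunct1[OF DFl[of m]]] DFl[of m] by simp
    also have "... = of_rat (of_nat (3*m+2) * bet a (m+1)) * P"
      unfolding d1_lead P_def by (simp add: of_rat_add of_rat_mult of_rat_of_nat_eq of_rat_numeral_eq algebra_simps power_Suc)
    finally show ?thesis by simp
  qed
  have "of_rat (3 * of_nat (m+1) * a (m+2)) * P =
     of_rat (1/2 * (\<Sum>k=0..m. bet a (k+1) * bet a (m-k+1)) + 1/2 * of_nat (3*m+2) * bet a (m+1)) * P"
  proof -
    have "coeff (pderiv (F (m+2))) (3*m+2) = 1/2 * coeff (\<Sum>h = 1..m+1. DF h * DF (m + 2 - h)) (3*m+2)
       + 1/2 * coeff (D (DF (m+1))) (3*m+2)"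
      by (simp only: an coeff_add coeff_smult)
    thus ?thesis unfolding L S T by (simp add: of_rat_add of_rat_mult of_rat_divide algebra_simps)
  qed
  thus ?thesis using P0 by simp
qed

end

lemma red:
  fixes s :: "rat fps"
  defines "u \<equiv> fps_X * fps_deriv s"
  assumes E: "3 * fps_X^2 * (fps_X * fps_deriv u + u^2 + 2*u + fps_const (5/9)) - 4 * u = 0"
  shows "theta_op (theta_op (fps_to_fls s)) + (theta_op (fps_to_fls s))\<^sup>2
         + 2 * (1 - 2 / (3 * fls_X\<^sup>2)) * theta_op (fps_to_fls s) + 5 / 9 = 0"
proof -
  have th: "theta_op (fps_to_fls f) = fps_to_fls (fps_X * fps_deriv f)" for f :: "rat fps"
    by (simp add: theta_op_def fls_deriv_fps_to_fls fls_times_fps_to_fls)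
  have X: "(fls_X :: rat fls) \<noteq> 0" by simp
  have c: "fls_const (5/9::rat) = 5/9" by (metis fls_const_divide_const fls_const_numeral)
  have "fps_to_fls (3 * fps_X^2 * (fps_X * fps_deriv u + u^2 + 2*u + fps_const (5/9)) - 4 * u) = 0"
    using E by simp
  hence "3 * fls_X^2 * (theta_op (fps_to_fls u) + (fps_to_fls u)^2 + 2 * fps_to_fls u + 5/9) - 4 * fps_to_fls u = 0"
    by (simp add: th fls_times_fps_to_fls fps_to_fls_power c)
  hence "3 * fls_X^2 * (theta_op (theta_op (fps_to_fls s)) + (theta_op (fps_to_fls s))\<^sup>2
         + 2 * (1 - 2 / (3 * fls_X\<^sup>2)) * theta_op (fps_to_fls s) + 5 / 9) = 0"
  proof -
    have k: "3 * fls_X^2 * (2 * (1 - 2/(3*fls_X^2))) = 6*fls_X^2 - (4::rat fls)"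
    proof -
      have gen: "\<And>y::rat fls. y \<noteq> 0 \<Longrightarrow> 3 * y * (2 * (1 - 2/(3*y))) = 6*y - 4"
        by (simp add: field_simps)
      show ?thesis using gen[of "fls_X^2"] X by simp
    qed
    have "3 * fls_X^2 * (theta_op (theta_op (fps_to_fls s)) + (theta_op (fps_to_fls s))\<^sup>2
         + 2 * (1 - 2 / (3 * fls_X\<^sup>2)) * theta_op (fps_to_fls s) + 5 / 9)
       = 3 * fls_X^2 * (theta_op (theta_op (fps_to_fls s)) + (theta_op (fps_to_fls s))\<^sup>2 + 5/9)
        + (3 * fls_X^2 * (2 * (1 - 2/(3*fls_X^2)))) * theta_op (fps_to_fls s)"
      by (simp add: algebra_simps)
    also have "... = 3 * fls_X^2 * (theta_op (fps_to_fls u) + (fps_to_fls u)^2 + 2 * fps_to_fls u + 5/9) - 4 * fps_to_fls u"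
      unfolding k th[of s, folded u_def] by (simp add: algebra_simps)
    finally show ?thesis using \<open>3 * fls_X^2 * (theta_op (fps_to_fls u) + (fps_to_fls u)^2 + 2 * fps_to_fls u + 5/9) - 4 * fps_to_fls u = 0\<close> by simp
  qed
  thus ?thesis using X by simp
qed


lemma sum_even_only:
  fixes f :: "nat \<Rightarrow> 'a::comm_monoid_add"
  assumes "\<And>i. odd i \<Longrightarrow> f i = 0"
  shows "(\<Sum>i=0..2*m. f i) = (\<Sum>k=0..m. f (2*k))"
proof (induction m)
  case 0 then show ?case by simp
next
  case (Suc m)
  have "(\<Sum>i=0..2*Suc m. f i) = (\<Sum>i=0..2*m. f i) + f (2*m+1) + f (2*m+2)"
    by (simp add: sum.atLeast0_atMost_Suc)
  also have "f (2*m+1) = 0" using assms by simp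
  finally show ?case using Suc by (simp add: sum.atLeast0_atMost_Suc)
qed

lemma fps_part:
  fixes a :: "nat \<Rightarrow> rat" and \<beta> :: "nat \<Rightarrow> rat"
  defines "s \<equiv> Abs_fps (\<lambda>n. if even n \<and> 2 \<le> n then a (n div 2 + 1) else 0)"
  defines "u \<equiv> fps_X * fps_deriv s"
  assumes beta1: "\<beta> 1 = 1/2"
    and beta: "\<And>h. h \<ge> 2 \<Longrightarrow> \<beta> h = 3 * of_nat (h - 1) * a h"
    and rec: "\<And>m. 3 * of_nat (m+1) * a (m+2) =
        1/2 * (\<Sum>k=0..m. \<beta> (k+1) * \<beta> (m-k+1)) + 1/2 * of_nat (3*m+2) * \<beta> (m+1)"
  shows "3 * fps_X^2 * (fps_X * fps_deriv u + u^2 + 2*u + fps_const (5/9)) - 4 * u = 0"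
proof -
  define V where "V = Abs_fps (\<lambda>n. if even n then \<beta> (n div 2 + 1) else 0)"
  have b1: "\<beta> (Suc 0) = 1/2" using beta1 by simp
  have un: "u $ n = of_nat n * s $ n" for n
    by (cases n) (simp_all add: u_def)
  have uV: "u = fps_const (2/3) * (V - fps_const (1/2))"
  proof (rule fps_ext)
    fix n
    show "u $ n = (fps_const (2/3) * (V - fps_const (1/2))) $ n"
    proof (cases "even n")
      case True
      then obtain k where k: "n = 2*k" by blast
      show ?thesis
      proof (cases k)
        case 0 then show ?thesis using k by (simp add: un s_def V_def b1)
      next
        case (Suc j)
        then show ?thesis using k beta[of "Suc k"] by (simp add: un s_def V_def)
      qed
    next
      case False
      then show ?thesis by (auto simp add: un s_def V_def intro: odd_pos) 
    qed
  qed
  have Vodd: "odd n \<Longrightarrow> V $ n = 0" for n by (simp add: V_def)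
  have Vev: "V $ (2*m) = \<beta> (m+1)" for m by (simp add: V_def)
  have V2odd: "(V^2) $ n = 0" if "odd n" for n
  proof -
    have "(V^2) $ n = (\<Sum>i=0..n. V$i * V$(n-i))" by (simp add: power2_eq_square fps_mult_nth)
    also have "... = 0"
    proof (rule sum.neutral, rule ballI)
      fix i assume "i \<in> {0..n}"
      hence "odd i \<or> odd (n-i)" using that by auto
      thus "V$i * V$(n-i) = 0" using Vodd[of i] Vodd[of "n-i"] by auto
    qed
    finally show ?thesis .
  qed
  have V2ev: "(V^2) $ (2*m) = (\<Sum>k=0..m. \<beta> (k+1) * \<beta> (m-k+1))" for m
  proof -
    have "(V^2) $ (2*m) = (\<Sum>i=0..2*m. V$i * V$(2*m-i))" by (simp add: power2_eq_square fps_mult_nth)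
    also have "... = (\<Sum>k=0..m. V$(2*k) * V$(2*m-2*k))"
      by (rule sum_even_only) (simp add: Vodd)
    also have "... = (\<Sum>k=0..m. \<beta> (k+1) * \<beta> (m-k+1))"
    proof (rule sum.cong[OF refl])
      fix k assume "k \<in> {0..m}"
      hence "2*m-2*k = 2*(m-k)" by auto
      thus "V$(2*k) * V$(2*m-2*k) = \<beta> (k+1) * \<beta> (m-k+1)" by (simp only: Vev)
    qed
    finally show ?thesis .
  qed
  have un2: "u $ n = 2/3 * (V $ n - (if n = 0 then 1/2 else 0))" for n
    by (simp add: uV)
  have u2: "u^2 = fps_const (4/9) * (V^2 - V) + fps_const (1/9)"
  proof -
    have gen: "\<And>c d W :: rat fps. 2*d = 1 \<Longrightarrow> (c*(W-d))^2 = (c*c)*(W^2 - W) + c*c*d*d"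
    proof -
      fix c d W :: "rat fps" assume h: "2*d = 1"
      have "(c*(W-d))^2 = (c*c)*(W^2 - (2*d)*W) + c*c*d*d" by (simp add: power2_eq_square algebra_simps)
      thus "(c*(W-d))^2 = (c*c)*(W^2 - W) + c*c*d*d" using h by simp
    qed
    have h2: "2 * fps_const (1/2::rat) = 1" by (simp add: numeral_fps_const)
    show ?thesis unfolding uV gen[OF h2] by simp
  qed
  have thn: "(fps_X * fps_deriv f) $ n = of_nat n * f $ n" for f :: "rat fps" and n
    by (cases n) simp_all
  define Y where "Y = fps_X * fps_deriv u + u^2 + 2*u + fps_const (5/9)"
  have Yn: "Y $ k = of_nat k * u $ k + 4/9 * ((V^2)$k - V$k) + (if k = 0 then 1/9 else 0)
             + 2 * u$k + (if k = 0 then 5/9 else 0)" for k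
    by (simp add: Y_def thn u2 fps_numeral_nth numeral_fps_const)
  have E: "3 * fps_X^2 * Y - 4 * u = fps_X^2 * (fps_const 3 * Y) - fps_const 4 * u"
    by (simp add: numeral_fps_const algebra_simps)
  show ?thesis unfolding Y_def[symmetric] E
  proof (rule fps_ext)
    fix n
    show "(fps_X^2 * (fps_const 3 * Y) - fps_const 4 * u) $ n = 0 $ n"
    proof (cases "n < 2")
      case True
      then show ?thesis by (auto simp: fps_X_power_mult_nth un s_def)
    next
      case False
      then obtain k where k: "n = k + 2" by (metis add.commute le_add_diff_inverse not_less)
      have main: "3 * Y $ k - 4 * u $ (k+2) = 0"
      proof (cases "even k")
        case False
        then show ?thesis using Vodd V2odd by (simp add: Yn un2)
      next
        case True
        then obtain m where m: "k = 2*m" by blast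
        have uk2: "u $ (k+2) = of_nat (2*m+2) * a (m+2)"
          using m by (simp add: un s_def)
        show ?thesis using rec[of m] unfolding uk2 unfolding Yn un2 m V2ev Vev
          by (cases "m = 0") (simp_all add: algebra_simps b1)
      qed
      show ?thesis using main k by (simp add: fps_X_power_mult_nth)
    qed
  qed
qed

theorem mainTheorem2:
  fixes D :: "'r::field_char_0 poly \<Rightarrow> 'r poly"
    and C :: 'r
    and G1 :: "'r poly"
    and F :: "nat \<Rightarrow> 'r poly"
    and DF :: "nat \<Rightarrow> 'r poly"
    and a :: "nat \<Rightarrow> rat"
  assumes C_nonzero: "C \<noteq> 0"
    and D_add: "\<forall>p q. D (p + q) = D p + D q"
    and D_Leibniz: "\<forall>p q. D (p * q) = p * D q + D p * q"
    and D_coeff: "\<forall>c. degree (D [:c:]) \<le> 1"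
    and D_Szz: "degree (D [:0, 1:] + monom C 2) \<le> 1"
    and D_C: "degree (D [:C:] - monom (3 * C ^ 2) 1) = 0"
    and DF1: "degree (G1 - monom (C / 2) 1) = 0"
    and DF_def: "\<forall>h. DF h = (if h = 1 then G1 else D (F h))"
    and leading: "\<forall>g\<ge>2. degree (F g - monom (of_rat (a g) * C ^ (2 * g - 2)) (3 * g - 3))
                          < 3 * g - 3"
    and anomaly: "\<forall>g\<ge>2. pderiv (F g) =
                     smult (1 / 2) (\<Sum>h = 1..g - 1. DF h * DF (g - h))
                     + smult (1 / 2) (D (DF (g - 1)))"
  shows "theta_op (theta_op (scaling_free_energy a)) + (theta_op (scaling_free_energy a))\<^sup>2
         + 2 * (1 - 2 / (3 * fls_X\<^sup>2)) * theta_op (scaling_free_energy a) + 5 / 9 = 0"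
  proof -
  interpret dctx2 D C G1 F DF a
    by unfold_locales (use assms in auto)
  define s where "s = Abs_fps (\<lambda>n. if even n \<and> 2 \<le> n then a (n div 2 + 1) else (0::rat))"
  have E: "3 * fps_X^2 * (fps_X * fps_deriv (fps_X * fps_deriv s) + (fps_X * fps_deriv s)^2
     + 2*(fps_X * fps_deriv s) + fps_const (5/9)) - 4 * (fps_X * fps_deriv s) = 0"
    unfolding s_def
  proof (rule fps_part[of "bet a"])
    show "bet a 1 = 1/2" by (simp add: bet_def)
    show "\<And>h. 2 \<le> h \<Longrightarrow> bet a h = 3 * of_nat (h - 1) * a h" by (simp add: bet_def)
    show "\<And>m. 3 * of_nat (m+1) * a (m+2) =
        1/2 * (\<Sum>k=0..m. bet a (k+1) * bet a (m-k+1)) + 1/2 * of_nat (3*m+2) * bet a (m+1)"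
      by (rule recursion)
  qed
  have "scaling_free_energy a = fps_to_fls s" by (simp add: scaling_free_energy_def s_def)
  thus ?thesis using red[OF E] by simp
qed

end
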